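(* Let $G$ be a bridgeless cubic graph and let $G_\triangle$ be the graph obtained from $G$ by replacing every vertex by a triangle. Then $G$ is $3$-edge-colorable if and only if $L(G_\triangle)=\frac{3}{2}\,l(G_\triangle)$.
   Context: Graphs are finite, undirected, without loops or multiple edges. $\nu(G)$ denotes the maximum size of a matching of $G$; a matching is maximum if it has $\nu(G)$ edges. For $F\subseteq E(G)$, $G\setminus F$ is the graph with vertex set $V(G)$ and edge set $E(G)\setminus F$. Define $L(G)=\max\{\nu(G\setminus F): F \text{ a maximum matching of } G\}$ and $l(G)=\min\{\nu(G\setminus F): F \text{ a maximum matching of } G\}$. Replacing a vertex $v$ of a cubic graph by a triangle means: delete $v$, add three new vertices $v_1,v_2,v_3$ forming a triangle, and for the three edges $vu_1,vu_2,vu_3$ formerly incident to $v$, join $v_i$ to the endpoint corresponding to $u_i$; doing this for all vertices simultaneously gives $G_\triangle$, whose edges are the triangle edges together with edges corresponding bijectively to $E(G)$. *)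

theory Defs
  imports Complex_Main
begin

definition graph :: "'a set \<Rightarrow> 'a set set \<Rightarrow> bool" where
  "graph V E \<longleftrightarrow> finite V \<and> (\<forall>e\<in>E. \<exists>u v. e = {u, v} \<and> u \<noteq> v \<and> u \<in> V \<and> v \<in> V)"

definition degree :: "'a set set \<Rightarrow> 'a \<Rightarrow> nat" where
  "degree E v = card {e \<in> E. v \<in> e}"

definition cubic :: "'a set \<Rightarrow> 'a set set \<Rightarrow> bool" where
  "cubic V E \<longleftrightarrow> graph V E \<and> (\<forall>v\<in>V. degree E v = 3)"

definition adj :: "'a set set \<Rightarrow> 'a \<Rightarrow> 'a \<Rightarrow> bool" where
  "adj E u v \<longleftrightarrow> {u, v} \<in> E \<and> u \<noteq> v"

definition is_bridge :: "'a set set \<Rightarrow> 'a set \<Rightarrow> bool" where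
  "is_bridge E e \<longleftrightarrow> e \<in> E \<and>
     (\<exists>u v. e = {u, v} \<and> u \<noteq> v \<and> \<not> (adj (E - {e}))\<^sup>*\<^sup>* u v)"

definition bridgeless :: "'a set \<Rightarrow> 'a set set \<Rightarrow> bool" where
  "bridgeless V E \<longleftrightarrow> (\<forall>e\<in>E. \<not> is_bridge E e)"

definition matching :: "'a set set \<Rightarrow> 'a set set \<Rightarrow> bool" where
  "matching E M \<longleftrightarrow> M \<subseteq> E \<and> (\<forall>e1\<in>M. \<forall>e2\<in>M. e1 \<noteq> e2 \<longrightarrow> e1 \<inter> e2 = {})"

definition nu :: "'a set set \<Rightarrow> nat" where
  "nu E = Max (card ` {M. matching E M})"

definition max_matching :: "'a set set \<Rightarrow> 'a set set \<Rightarrow> bool" where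
  "max_matching E F \<longleftrightarrow> matching E F \<and> card F = nu E"

text \<open>G minus F has edge set E - F (same vertices; nu depends only on edges).\<close>
definition L_inv :: "'a set set \<Rightarrow> nat" where
  "L_inv E = Max ((\<lambda>F. nu (E - F)) ` {F. max_matching E F})"

definition l_inv :: "'a set set \<Rightarrow> nat" where
  "l_inv E = Min ((\<lambda>F. nu (E - F)) ` {F. max_matching E F})"

definition three_edge_colorable :: "'a set set \<Rightarrow> bool" where
  "three_edge_colorable E \<longleftrightarrow> (\<exists>c :: 'a set \<Rightarrow> nat. (\<forall>e\<in>E. c e < 3) \<and>
     (\<forall>e1\<in>E. \<forall>e2\<in>E. e1 \<noteq> e2 \<and> e1 \<inter> e2 \<noteq> {} \<longrightarrow> c e1 \<noteq> c e2))"

text \<open>Replacing every vertex by a triangle: the vertex v is replaced by the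
  vertices (v,u) for the neighbours u of v; (v,u) is joined to (u,v) (the edge
  corresponding to uv), and the vertices (v,u),(v,w) form a triangle.\<close>
definition tri_V :: "'a set set \<Rightarrow> ('a \<times> 'a) set" where
  "tri_V E = {(v, u). {v, u} \<in> E \<and> v \<noteq> u}"

definition tri_E :: "'a set set \<Rightarrow> ('a \<times> 'a) set set" where
  "tri_E E = {{(v, u), (v, w)} | v u w. {v, u} \<in> E \<and> {v, w} \<in> E \<and> u \<noteq> w \<and> v \<noteq> u \<and> v \<noteq> w}
           \<union> {{(v, u), (u, v)} | v u. {v, u} \<in> E \<and> v \<noteq> u}"

end

theory Submission
  imports Defs
begin


lemma matching_sub: "matching H M \<Longrightarrow> M \<subseteq> H"
  by (simp add: matching_def)

lemma nu_ge: assumes "finite H" "matching H M" shows "card M \<le> nu H"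
proof -
  have "finite {M. matching H M}" using assms(1)
    by (rule finite_subset[rotated, OF finite_Pow_iff[THEN iffD2]]) (auto simp: matching_def)
  then show ?thesis unfolding nu_def using assms(2) by (intro Max_ge) auto
qed

lemma nu_attained: assumes "finite H" obtains M where "matching H M" "card M = nu H"
proof -
  have "finite {M. matching H M}" using assms(1)
    by (rule finite_subset[rotated, OF finite_Pow_iff[THEN iffD2]]) (auto simp: matching_def)
  moreover have "matching H {}" by (simp add: matching_def)
  ultimately have "nu H \<in> card ` {M. matching H M}" unfolding nu_def
    by (intro Max_in) auto
  then show ?thesis using that by auto
qed

lemma matching_Diff: "matching (H - F) M \<Longrightarrow> matching H M"
  by (auto simp: matching_def)

lemma nu_Diff_le: assumes "finite H" shows "nu (H - F) \<le> nu H"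
proof -
  obtain M where "matching (H - F) M" "card M = nu (H - F)" using nu_attained[of "H - F"] assms by auto
  then show ?thesis using nu_ge[OF assms matching_Diff] by metis
qed

lemma card_Union_matching:
  assumes "matching H M" "\<And>e. e \<in> H \<Longrightarrow> card e = 2" "finite M"
  shows "card (\<Union>M) = 2 * card M"
proof -
  have "card (\<Union>M) = sum card M"
  proof (rule card_Union_disjoint)
    show "pairwise disjnt M" using assms(1) by (auto simp: matching_def pairwise_def disjnt_def)
    fix A assume "A \<in> M" then show "finite A" using assms(1,2)
      by (metis card.infinite matching_sub subsetD zero_neq_numeral)
  qed
  also have "\<dots> = sum (\<lambda>_. 2) M" using assms(1,2) by (intro sum.cong) (auto simp: matching_def)
  finally show ?thesis by simp
qed

lemma L_l_facts:
  assumes "finite H"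
  shows "\<And>F. max_matching H F \<Longrightarrow> nu (H - F) \<le> L_inv H"
    and "\<And>F. max_matching H F \<Longrightarrow> l_inv H \<le> nu (H - F)"
    and "\<exists>F. max_matching H F \<and> L_inv H = nu (H - F)"
    and "\<exists>F. max_matching H F \<and> l_inv H = nu (H - F)"
proof -
  have fin: "finite {F. max_matching H F}" using assms
    by (rule finite_subset[rotated, OF finite_Pow_iff[THEN iffD2]]) (auto simp: max_matching_def matching_def)
  obtain M where "matching H M" "card M = nu H" using nu_attained assms by blast
  then have ne: "{F. max_matching H F} \<noteq> {}" by (auto simp: max_matching_def)
  show "\<And>F. max_matching H F \<Longrightarrow> nu (H - F) \<le> L_inv H" unfolding L_inv_def using fin by (intro Max_ge) auto
  show "\<And>F. max_matching H F \<Longrightarrow> l_inv H \<le> nu (H - F)" unfolding l_inv_def using fin by (intro Min_le) auto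
  have "L_inv H \<in> (\<lambda>F. nu (H - F)) ` {F. max_matching H F}" unfolding L_inv_def using fin ne by (intro Max_in) auto
  then show "\<exists>F. max_matching H F \<and> L_inv H = nu (H - F)" by auto
  have "l_inv H \<in> (\<lambda>F. nu (H - F)) ` {F. max_matching H F}" unfolding l_inv_def using fin ne by (intro Min_in) auto
  then show "\<exists>F. max_matching H F \<and> l_inv H = nu (H - F)" by auto
qed




locale cub = fixes V :: "'a set" and E :: "'a set set" assumes cub: "cubic V E"
begin

definition N where "N v = {u. {v, u} \<in> E}"

lemma edge_form: "e \<in> E \<Longrightarrow> \<exists>u v. e = {u, v} \<and> u \<noteq> v \<and> u \<in> V \<and> v \<in> V"
  using cub by (auto simp: cubic_def graph_def)

lemma finV: "finite V" using cub by (auto simp: cubic_def graph_def)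

lemma finE: "finite E"
proof -
  have "E \<subseteq> Pow V" using edge_form by blast
  then show ?thesis using finV by (meson finite_Pow_iff finite_subset)
qed

lemma nbr: assumes "u \<in> N v" shows "v \<noteq> u" "v \<in> V" "u \<in> V"
proof -
  obtain a b where "{v,u} = {a,b}" "a \<noteq> b" "a \<in> V" "b \<in> V" using assms edge_form unfolding N_def by blast
  then show "v \<noteq> u" "v \<in> V" "u \<in> V" by (auto simp: doubleton_eq_iff)
qed

lemma N_sym: "u \<in> N v \<longleftrightarrow> v \<in> N u" by (auto simp: N_def insert_commute)

lemma card_N: assumes "v \<in> V" shows "card (N v) = 3"
proof -
  have "bij_betw (\<lambda>u. {v, u}) (N v) {e \<in> E. v \<in> e}"
  proof (rule bij_betwI')
    fix x y assume "x \<in> N v" "y \<in> N v"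
    then show "({v, x} = {v, y}) = (x = y)" using nbr by (auto simp: doubleton_eq_iff)
  next
    fix x assume "x \<in> N v" then show "{v, x} \<in> {e \<in> E. v \<in> e}" by (auto simp: N_def)
  next
    fix e assume "e \<in> {e \<in> E. v \<in> e}"
    then obtain a b where "e = {a,b}" "a \<noteq> b" "v \<in> e" "e \<in> E" using edge_form by blast
    then show "\<exists>x\<in>N v. e = {v, x}" unfolding N_def by (auto simp: insert_commute)
  qed
  then have "card (N v) = degree E v" unfolding degree_def by (rule bij_betw_same_card)
  then show ?thesis using cub assms by (auto simp: cubic_def)
qed

lemma three: assumes "v \<in> V" obtains a b c where "N v = {a,b,c}" "a \<noteq> b" "b \<noteq> c" "a \<noteq> c"
  using card_N[OF assms] by (auto simp: card_3_iff)

abbreviation "W \<equiv> tri_V E"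
abbreviation "H \<equiv> tri_E E"

definition ext :: "'a \<Rightarrow> 'a \<Rightarrow> ('a \<times> 'a) set" where "ext v u = {(v,u),(u,v)}"

lemma W_iff: "x \<in> W \<longleftrightarrow> snd x \<in> N (fst x)"
proof (cases x)
  case (Pair a b)
  then show ?thesis using nbr(1)[of b a] by (auto simp: tri_V_def N_def)
qed

lemma H_iff: "e \<in> H \<longleftrightarrow> (\<exists>v u w. e = {(v,u),(v,w)} \<and> u \<in> N v \<and> w \<in> N v \<and> u \<noteq> w) \<or> (\<exists>v u. e = ext v u \<and> u \<in> N v)"
proof
  assume "e \<in> H" then show "(\<exists>v u w. e = {(v,u),(v,w)} \<and> u \<in> N v \<and> w \<in> N v \<and> u \<noteq> w) \<or> (\<exists>v u. e = ext v u \<and> u \<in> N v)"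
    unfolding tri_E_def ext_def N_def by blast
next
  assume "(\<exists>v u w. e = {(v,u),(v,w)} \<and> u \<in> N v \<and> w \<in> N v \<and> u \<noteq> w) \<or> (\<exists>v u. e = ext v u \<and> u \<in> N v)"
  then show "e \<in> H"
  proof
    assume "\<exists>v u w. e = {(v,u),(v,w)} \<and> u \<in> N v \<and> w \<in> N v \<and> u \<noteq> w"
    then obtain v u w where h: "e = {(v,u),(v,w)}" "u \<in> N v" "w \<in> N v" "u \<noteq> w" by blast
    then have "v \<noteq> u" "v \<noteq> w" using nbr by auto
    then show "e \<in> H" using h unfolding tri_E_def N_def by blast
  next
    assume "\<exists>v u. e = ext v u \<and> u \<in> N v"
    then obtain v u where h: "e = ext v u" "u \<in> N v" by blast
    then have "v \<noteq> u" using nbr by auto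
    then show "e \<in> H" using h unfolding tri_E_def N_def ext_def by blast
  qed
qed

lemma ext_in_H: "u \<in> N v \<Longrightarrow> ext v u \<in> H" unfolding H_iff by blast
lemma tri_in_H: "u \<in> N v \<Longrightarrow> w \<in> N v \<Longrightarrow> u \<noteq> w \<Longrightarrow> {(v,u),(v,w)} \<in> H" unfolding H_iff by blast

lemma H_sub: assumes "e \<in> H" shows "e \<subseteq> W \<and> card e = 2"
  using assms unfolding H_iff
proof
  assume "\<exists>v u w. e = {(v,u),(v,w)} \<and> u \<in> N v \<and> w \<in> N v \<and> u \<noteq> w"
  then obtain v u w where h: "e = {(v,u),(v,w)}" "u \<in> N v" "w \<in> N v" "u \<noteq> w" by blast
  then show ?thesis by (simp add: W_iff)
next
  assume "\<exists>v u. e = ext v u \<and> u \<in> N v"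
  then obtain v u where h: "e = ext v u" "u \<in> N v" by blast
  then have "v \<noteq> u" "v \<in> N u" using nbr N_sym by auto
  then show ?thesis using h by (simp add: W_iff ext_def)
qed

lemma finW: "finite W"
proof -
  have "W \<subseteq> V \<times> V" using nbr W_iff by force
  then show ?thesis using finV finite_subset by blast
qed

lemma finH: "finite H"
proof -
  have "H \<subseteq> Pow W" using H_sub by blast
  then show ?thesis using finW by (meson finite_Pow_iff finite_subset)
qed

lemma at_vertex: assumes "e \<in> H" "(v,u) \<in> e"
  shows "e = ext v u \<or> (\<exists>w\<in>N v. w \<noteq> u \<and> e = {(v,u),(v,w)})"
  using assms(1) unfolding H_iff
proof
  assume "\<exists>a b c. e = {(a,b),(a,c)} \<and> b \<in> N a \<and> c \<in> N a \<and> b \<noteq> c"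
  then obtain a b c where h: "e = {(a,b),(a,c)}" "b \<in> N a" "c \<in> N a" "b \<noteq> c" by blast
  then show ?thesis using assms(2) by (auto simp: insert_commute)
next
  assume "\<exists>a b. e = ext a b \<and> b \<in> N a"
  then obtain a b where h: "e = ext a b" "b \<in> N a" by blast
  then show ?thesis using assms(2) by (auto simp: ext_def insert_commute)
qed

lemma ext_ne_tri: "ext v u \<noteq> {(a,b),(a,c)}" if "u \<in> N v"
  using nbr[OF that] that unfolding ext_def by (auto simp: doubleton_eq_iff)

definition X where "X = {ext v u | v u. u \<in> N v}"

lemma X_matching: "matching H X"
  unfolding matching_def X_def using ext_in_H by (auto simp: ext_def)

lemma card_X: "card X = card E"
proof -
  have "bij_betw (\<lambda>x. fst ` x) X E"
  proof (rule bij_betwI')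
    fix x y assume "x \<in> X" "y \<in> X" then show "(fst ` x = fst ` y) = (x = y)"
      unfolding X_def ext_def by (auto simp: doubleton_eq_iff)
  next
    fix x assume "x \<in> X" then show "fst ` x \<in> E" unfolding X_def ext_def N_def by (auto simp: insert_commute)
  next
    fix e assume "e \<in> E"
    then obtain a b where "e = {a,b}" "a \<noteq> b" using edge_form by blast
    then have "ext a b \<in> X" "fst ` ext a b = e" using \<open>e \<in> E\<close> unfolding X_def ext_def N_def by auto
    then show "\<exists>x\<in>X. e = fst ` x" by metis
  qed
  then show ?thesis by (rule bij_betw_same_card)
qed

lemma UX: "\<Union>X = W"
proof
  show "\<Union>X \<subseteq> W" unfolding X_def ext_def using N_sym by (auto simp: W_iff)
  show "W \<subseteq> \<Union>X"
  proof
    fix x assume "x \<in> W"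
    then have "ext (fst x) (snd x) \<in> X" "x \<in> ext (fst x) (snd x)" unfolding X_def ext_def W_iff
      by (metis (mono_tags, lifting) mem_Collect_eq, simp)
    then show "x \<in> \<Union>X" by blast
  qed
qed

lemma card_W: "card W = 2 * card E"
  using card_Union_matching[OF X_matching] H_sub finH X_matching UX card_X
  by (metis finite_subset matching_sub)

lemma nu_H: "nu H = card E"
proof (rule antisym)
  obtain M where M: "matching H M" "card M = nu H" using nu_attained finH by blast
  have fM: "finite M" using M finH by (meson finite_subset matching_sub)
  have "\<Union>M \<subseteq> W" using M H_sub by (auto simp: matching_def)
  then have "card (\<Union>M) \<le> card W" using finW card_mono by blast
  then show "nu H \<le> card E" using card_Union_matching[OF M(1) H_sub[THEN conjunct2] fM] M card_W by simp
  show "card E \<le> nu H" using nu_ge[OF finH X_matching] card_X by simp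
qed

lemma perfect_cover: assumes "matching H F" "card F = card E" "x \<in> W" shows "\<exists>e\<in>F. x \<in> e"
proof -
  have fF: "finite F" using assms finH by (meson finite_subset matching_sub)
  have "\<Union>F \<subseteq> W" using assms H_sub by (auto simp: matching_def)
  moreover have "card (\<Union>F) = card W" using card_Union_matching[OF assms(1) H_sub[THEN conjunct2] fF] assms card_W by simp
  ultimately have "\<Union>F = W" using finW card_subset_eq by blast
  then show ?thesis using assms by auto
qed

lemma cover_perfect: assumes "matching H F" "\<And>x. x \<in> W \<Longrightarrow> \<exists>e\<in>F. x \<in> e" shows "card F = card E"
proof -
  have fF: "finite F" using assms finH by (meson finite_subset matching_sub)
  have "\<Union>F \<subseteq> W" using assms H_sub by (auto simp: matching_def)
  moreover have "W \<subseteq> \<Union>F" using assms by auto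
  ultimately have "\<Union>F = W" by auto
  then show ?thesis using card_Union_matching[OF assms(1) H_sub[THEN conjunct2] fF] card_W by simp
qed

end



context cub begin

lemma Pair_N_sub_W: "Pair v ` N v \<subseteq> W" by (auto simp: W_iff)

lemma card_PairN: "v \<in> V \<Longrightarrow> card (Pair v ` N v) = 3"
  using card_N by (simp add: card_image inj_on_def)

lemma handshake: "2 * card E = 3 * card V"
proof -
  have "W = (\<Union>v\<in>V. Pair v ` N v)"
  proof
    show "W \<subseteq> (\<Union>v\<in>V. Pair v ` N v)"
    proof
      fix x assume "x \<in> W"
      then have "snd x \<in> N (fst x)" by (simp add: W_iff)
      then show "x \<in> (\<Union>v\<in>V. Pair v ` N v)" using nbr(2) by (cases x) auto
    qed
    show "(\<Union>v\<in>V. Pair v ` N v) \<subseteq> W" using Pair_N_sub_W by blast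
  qed
  then have "card W = (\<Sum>v\<in>V. card (Pair v ` N v))"
    by (simp only:, intro card_UN_disjoint finV) (auto intro: finite_subset[OF Pair_N_sub_W finW])
  also have "\<dots> = (\<Sum>v\<in>V. 3)" using card_PairN by simp
  finally show ?thesis using card_W by simp
qed

lemma tri_avoid: assumes "v \<in> V" "matching H F"
  shows "\<exists>t. t \<in> H - F \<and> (\<exists>a b. t = {(v,a),(v,b)} \<and> a \<noteq> b)"
proof -
  obtain a b c where abc: "N v = {a,b,c}" "a \<noteq> b" "b \<noteq> c" "a \<noteq> c" using three[OF assms(1)] by blast
  have h1: "{(v,a),(v,b)} \<in> H" "{(v,a),(v,c)} \<in> H" using abc by (simp_all add: tri_in_H)
  have "{(v,a),(v,b)} \<noteq> {(v,a),(v,c)}" using abc by (auto simp: doubleton_eq_iff)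
  moreover have "{(v,a),(v,b)} \<inter> {(v,a),(v,c)} \<noteq> {}" by simp
  ultimately have nb: "\<not> ({(v,a),(v,b)} \<in> F \<and> {(v,a),(v,c)} \<in> F)" using assms(2) unfolding matching_def by metis
  show ?thesis
  proof (cases "{(v,a),(v,b)} \<in> F")
    case True
    then have "{(v,a),(v,c)} \<in> H - F" using nb h1 by simp
    then show ?thesis using abc(4) by (intro exI[of _ "{(v,a),(v,c)}"]) blast
  next
    case False
    then have "{(v,a),(v,b)} \<in> H - F" using h1 by simp
    then show ?thesis using abc(2) by (intro exI[of _ "{(v,a),(v,b)}"]) blast
  qed
qed

lemma lower: assumes "matching H F" shows "card V \<le> nu (H - F)"
proof -
  have "\<forall>v\<in>V. \<exists>t. t \<in> H - F \<and> (\<exists>a b. t = {(v,a),(v,b)} \<and> a \<noteq> b)"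
    using tri_avoid[OF _ assms] by blast
  from bchoice[OF this] obtain f where f: "\<forall>v\<in>V. f v \<in> H - F \<and> (\<exists>a b. f v = {(v,a),(v,b)} \<and> a \<noteq> b)"
    by blast
  have fst_f: "\<And>v x. v \<in> V \<Longrightarrow> x \<in> f v \<Longrightarrow> fst x = v" using f by fastforce
  have ne: "\<And>v. v \<in> V \<Longrightarrow> f v \<noteq> {}" using f by fastforce
  have inj: "inj_on f V"
  proof (rule inj_onI)
    fix v w assume "v \<in> V" "w \<in> V" "f v = f w"
    then obtain x where "x \<in> f v" "x \<in> f w" using ne by blast
    then show "v = w" using fst_f \<open>v \<in> V\<close> \<open>w \<in> V\<close> by metis
  qed
  have "matching (H - F) (f ` V)"
    unfolding matching_def
  proof (intro conjI ballI impI)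
    show "f ` V \<subseteq> H - F" using f by blast
    fix e1 e2 assume "e1 \<in> f ` V" "e2 \<in> f ` V" "e1 \<noteq> e2"
    then obtain v w where "v \<in> V" "w \<in> V" "e1 = f v" "e2 = f w" "v \<noteq> w" by blast
    then show "e1 \<inter> e2 = {}" using fst_f by blast
  qed
  then have "card (f ` V) \<le> nu (H - F)" using nu_ge finH by blast
  then show ?thesis using card_image[OF inj] by simp
qed

lemma HX: assumes "e \<in> H" "e \<notin> X"
  shows "\<exists>v u w. e = {(v,u),(v,w)} \<and> u \<in> N v \<and> w \<in> N v \<and> u \<noteq> w"
proof -
  have "\<not> (\<exists>v u. e = ext v u \<and> u \<in> N v)" using assms(2) unfolding X_def by blast
  then show ?thesis using assms(1) unfolding H_iff by blast
qed

lemma upper: "nu (H - X) \<le> card V"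
proof -
  obtain M where M: "matching (H - X) M" "card M = nu (H - X)" using nu_attained[of "H - X"] finH by blast
  define phi where "phi e = fst (SOME x. x \<in> e)" for e :: "('a \<times> 'a) set"
  have key: "phi e \<in> V \<and> e \<subseteq> Pair (phi e) ` N (phi e)" if "e \<in> M" for e
  proof -
    from that M(1) have "e \<in> H" "e \<notin> X" by (auto simp: matching_def)
    then obtain v u w where h: "e = {(v,u),(v,w)}" "u \<in> N v" "w \<in> N v" "u \<noteq> w" using HX by blast
    have "(SOME x. x \<in> e) \<in> e" using h by (metis insertI1 someI_ex)
    then have "phi e = v" unfolding phi_def using h by auto
    then show ?thesis using h nbr by auto
  qed
  have "inj_on phi M"
  proof (rule inj_onI)
    fix e1 e2 assume a: "e1 \<in> M" "e2 \<in> M" "phi e1 = phi e2"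
    show "e1 = e2"
    proof (rule ccontr)
      assume "e1 \<noteq> e2"
      then have dis: "e1 \<inter> e2 = {}" using a M(1) by (auto simp: matching_def)
      let ?v = "phi e1"
      have sub: "e1 \<union> e2 \<subseteq> Pair ?v ` N ?v" using key[OF a(1)] key[OF a(2)] a(3) by simp
      have c1: "card e1 = 2" "card e2 = 2" using a M(1) H_sub by (auto simp: matching_def)
      then have "finite e1" "finite e2" by (auto intro: card_ge_0_finite)
      then have "card (e1 \<union> e2) = 4" using dis c1 card_Un_disjoint by fastforce
      moreover have "card (e1 \<union> e2) \<le> 3"
        using card_mono[OF finite_subset[OF Pair_N_sub_W finW] sub] card_PairN key a by simp
      ultimately show False by simp
    qed
  qed
  moreover have "phi ` M \<subseteq> V" using key by blast
  ultimately have "card M \<le> card V" using card_inj_on_le finV by blast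
  then show ?thesis using M by simp
qed

lemma X_max: "max_matching H X" using X_matching card_X nu_H by (simp add: max_matching_def)

lemma l_val: "l_inv H = card V"
proof (rule antisym)
  show "l_inv H \<le> card V" using L_l_facts(2)[OF finH X_max] upper by simp
  obtain F where "max_matching H F" "l_inv H = nu (H - F)" using L_l_facts(4)[OF finH] by blast
  then show "card V \<le> l_inv H" using lower by (simp add: max_matching_def)
qed

lemma L_le: "L_inv H \<le> card E"
  using L_l_facts(3)[OF finH] nu_Diff_le[OF finH] nu_H by metis

end



lemma match_eq: "matching H A \<Longrightarrow> e1 \<in> A \<Longrightarrow> e2 \<in> A \<Longrightarrow> x \<in> e1 \<Longrightarrow> x \<in> e2 \<Longrightarrow> e1 = e2"
  unfolding matching_def by blast

context cub begin

lemma N_eq3: assumes "u \<in> N v" "w \<in> N v" "z \<in> N v" "u \<noteq> w" "w \<noteq> z" "u \<noteq> z"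
  shows "N v = {u,w,z}"
proof -
  have "v \<in> V" using nbr assms by blast
  then have "card (N v) = 3" by (rule card_N)
  moreover have "finite (N v)" using \<open>card (N v) = 3\<close> by (intro card_ge_0_finite) simp
  ultimately show ?thesis using assms by (intro card_subset_eq[symmetric]) auto
qed

lemma third: assumes "u \<in> N v" "y \<in> N v" shows "\<exists>w\<in>N v. w \<noteq> u \<and> w \<noteq> y"
proof (rule ccontr)
  assume "\<not> ?thesis"
  then have "N v \<subseteq> {u,y}" by auto
  then have "card (N v) \<le> card {u,y}" by (intro card_mono) auto
  also have "\<dots> \<le> 2" by (simp add: card_insert_if)
  finally have "card (N v) \<le> 2" .
  moreover have "v \<in> V" using nbr assms by blast
  ultimately show False using card_N by simp
qed

lemma at3: assumes "N v = {u,w,z}" "e \<in> H" "(v,u) \<in> e"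
  shows "e = ext v u \<or> e = {(v,u),(v,w)} \<or> e = {(v,u),(v,z)}"
  using at_vertex[OF assms(2,3)] assms(1) by auto

lemma ext_ne_tri': "u \<in> N v \<Longrightarrow> {(a,b),(a,c)} \<noteq> ext v u" using ext_ne_tri by metis

lemma two_same:
  assumes A: "matching H A" "card A = card E" and B: "matching H B" "card B = card E" and AB: "A \<inter> B = {}"
    and uw: "u \<in> N v" "w \<in> N v" "u \<noteq> w" and ea: "ext v u \<in> A" "ext v w \<in> A"
  shows False
proof -
  obtain z where z: "z \<in> N v" "z \<noteq> u" "z \<noteq> w" using third[OF uw(1,2)] by blast
  have N3: "N v = {u,w,z}" using N_eq3 uw z by auto
  have N3b: "N v = {w,u,z}" "N v = {z,u,w}" using N3 by auto
  have vne: "v \<noteq> u" "v \<noteq> w" "v \<noteq> z" using nbr uw z by auto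
  have Wc: "(v,z) \<in> W" "(v,u) \<in> W" using z uw by (auto simp: W_iff)
  obtain ec where ec: "ec \<in> A" "(v,z) \<in> ec" using perfect_cover[OF A Wc(1)] by blast
  have "ec \<in> H" using ec A by (auto simp: matching_def)
  then have "ec = ext v z \<or> ec = {(v,z),(v,u)} \<or> ec = {(v,z),(v,w)}" using at3[OF N3b(2) _ ec(2)] by blast
  moreover have "ec \<noteq> {(v,z),(v,u)}"
  proof
    assume "ec = {(v,z),(v,u)}"
    then have "ec = ext v u" using match_eq[OF A(1) ec(1) ea(1), of "(v,u)"] by (simp add: ext_def)
    then show False using \<open>ec = {(v,z),(v,u)}\<close> ext_ne_tri'[OF uw(1)] by metis
  qed
  moreover have "ec \<noteq> {(v,z),(v,w)}"
  proof
    assume "ec = {(v,z),(v,w)}"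
    then have "ec = ext v w" using match_eq[OF A(1) ec(1) ea(2), of "(v,w)"] by (simp add: ext_def)
    then show False using \<open>ec = {(v,z),(v,w)}\<close> ext_ne_tri'[OF uw(2)] by metis
  qed
  ultimately have ezA: "ext v z \<in> A" using ec by blast
  obtain fa where fa: "fa \<in> B" "(v,u) \<in> fa" using perfect_cover[OF B Wc(2)] by blast
  obtain fc where fc: "fc \<in> B" "(v,z) \<in> fc" using perfect_cover[OF B Wc(1)] by blast
  have "fa \<in> H" "fc \<in> H" using fa fc B by (auto simp: matching_def)
  have nB: "ext v u \<notin> B" "ext v w \<notin> B" "ext v z \<notin> B" using AB ea ezA by blast+
  have "fa \<noteq> ext v u" "fc \<noteq> ext v z" using nB fa fc by metis+
  then have fa': "fa = {(v,u),(v,w)} \<or> fa = {(v,u),(v,z)}"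
    and fc': "fc = {(v,z),(v,u)} \<or> fc = {(v,z),(v,w)}"
    using at3[OF N3 \<open>fa \<in> H\<close> fa(2)] at3[OF N3b(2) \<open>fc \<in> H\<close> fc(2)] by blast+
  show False
  proof (cases "fa = {(v,u),(v,w)}")
    case True
    show False using fc'
    proof
      assume h: "fc = {(v,z),(v,u)}"
      then have "fa = fc" using match_eq[OF B(1) fa(1) fc(1), of "(v,u)"] fa(2) by simp
      then have "(v,w) \<in> fc" using True by (metis insertCI)
      then show False using h z uw by simp
    next
      assume h: "fc = {(v,z),(v,w)}"
      then have "fa = fc" using match_eq[OF B(1) fa(1) fc(1), of "(v,w)"] True by simp
      then have "(v,u) \<in> fc" using True by (metis insertCI)
      then show False using h z uw by simp
    qed
  next
    case False
    then have fa2: "fa = {(v,u),(v,z)}" using fa' by blast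
    have "(v,w) \<in> W" using uw by (simp add: W_iff)
    then obtain fb where fb: "fb \<in> B" "(v,w) \<in> fb" using perfect_cover[OF B] by blast
    have "fb \<in> H" using fb B by (auto simp: matching_def)
    have "fb \<noteq> ext v w" using nB fb by metis
    then have "fb = {(v,w),(v,u)} \<or> fb = {(v,w),(v,z)}"
      using at3[OF N3b(1) \<open>fb \<in> H\<close> fb(2)] by blast
    then show False
    proof
      assume h: "fb = {(v,w),(v,u)}"
      then have "fa = fb" using match_eq[OF B(1) fa(1) fb(1), of "(v,u)"] fa2 by simp
      then have "(v,w) \<in> fa" using h by (metis insertCI)
      then show False using fa2 z uw by simp
    next
      assume h: "fb = {(v,w),(v,z)}"
      then have "fa = fb" using match_eq[OF B(1) fa(1) fb(1), of "(v,z)"] fa2 by simp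
      then have "(v,u) \<in> fb" using fa2 by (metis insertCI)
      then show False using h z uw by simp
    qed
  qed
qed

lemma two_none:
  assumes A: "matching H A" "card A = card E" and B: "matching H B" "card B = card E" and AB: "A \<inter> B = {}"
    and uw: "u \<in> N v" "w \<in> N v" "u \<noteq> w" and ea: "ext v u \<notin> A \<union> B" "ext v w \<notin> A \<union> B"
  shows False
proof -
  obtain z where z: "z \<in> N v" "z \<noteq> u" "z \<noteq> w" using third[OF uw(1,2)] by blast
  have N3: "N v = {u,w,z}" using N_eq3 uw z by auto
  have N3b: "N v = {w,u,z}" using N3 by auto
  have vne: "v \<noteq> u" "v \<noteq> w" "v \<noteq> z" using nbr uw z by auto
  have Wc: "(v,u) \<in> W" "(v,w) \<in> W" using uw by (auto simp: W_iff)
  obtain ea' where a1: "ea' \<in> A" "(v,u) \<in> ea'" using perfect_cover[OF A Wc(1)] by blast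
  obtain eb where b1: "eb \<in> A" "(v,w) \<in> eb" using perfect_cover[OF A Wc(2)] by blast
  obtain fa where a2: "fa \<in> B" "(v,u) \<in> fa" using perfect_cover[OF B Wc(1)] by blast
  obtain fb where b2: "fb \<in> B" "(v,w) \<in> fb" using perfect_cover[OF B Wc(2)] by blast
  have H4: "ea' \<in> H" "eb \<in> H" "fa \<in> H" "fb \<in> H" using a1 b1 a2 b2 A B by (auto simp: matching_def)
  have ne: "ea' \<noteq> ext v u" "fa \<noteq> ext v u" "eb \<noteq> ext v w" "fb \<noteq> ext v w"
    using a1(1) a2(1) b1(1) b2(1) ea by blast+
  have ea1: "ea' = {(v,u),(v,w)} \<or> ea' = {(v,u),(v,z)}" using at3[OF N3 H4(1) a1(2)] ne by blast
  have fa1: "fa = {(v,u),(v,w)} \<or> fa = {(v,u),(v,z)}" using at3[OF N3 H4(3) a2(2)] ne by blast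
  have eb1: "eb = {(v,w),(v,u)} \<or> eb = {(v,w),(v,z)}" using at3[OF N3b H4(2) b1(2)] ne by blast
  have fb1: "fb = {(v,w),(v,u)} \<or> fb = {(v,w),(v,z)}" using at3[OF N3b H4(4) b2(2)] ne by blast
  have nAB: "ea' \<noteq> fa" "eb \<noteq> fb" using a1 a2 b1 b2 AB by blast+
  have ab: "{(v,w),(v,u)} = {(v,u),(v,w)}" by (rule insert_commute)
  have d1: "{(v,u),(v,z)} \<noteq> {(v,w),(v,z)}" using uw z by (simp add: doubleton_eq_iff)
  have d2: "{(v,u),(v,w)} \<noteq> {(v,u),(v,z)}" using uw z by (simp add: doubleton_eq_iff)
  have d3: "{(v,u),(v,w)} \<noteq> {(v,w),(v,z)}" using z uw by (simp add: doubleton_eq_iff)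
  have zin: "(v,z) \<in> {(v,u),(v,z)}" "(v,z) \<in> {(v,w),(v,z)}" by simp_all
  show False
  proof (cases "ea' = {(v,u),(v,w)}")
    case True
    then have f1: "fa = {(v,u),(v,z)}" using fa1 nAB by metis
    have "fb \<noteq> {(v,u),(v,w)}"
    proof
      assume "fb = {(v,u),(v,w)}"
      then have "fb = ea'" using True by simp
      then show False using a1(1) b2(1) AB by blast
    qed
    then have f2: "fb = {(v,w),(v,z)}" using fb1 ab by metis
    have "fa = fb" using match_eq[OF B(1) a2(1) b2(1) _ _] f1 f2 zin by metis
    then show False using f1 f2 d1 by simp
  next
    case False
    then have e2: "ea' = {(v,u),(v,z)}" using ea1 by blast
    then have f1: "fa = {(v,u),(v,w)}" using fa1 nAB by metis
    have "eb \<noteq> {(v,u),(v,w)}"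
    proof
      assume "eb = {(v,u),(v,w)}"
      then have "eb = fa" using f1 by simp
      then show False using b1(1) a2(1) AB by blast
    qed
    then have e3: "eb = {(v,w),(v,z)}" using eb1 ab by metis
    have "ea' = eb" using match_eq[OF A(1) a1(1) b1(1) _ _] e2 e3 zin by metis
    then show False using e2 e3 d1 by simp
  qed
qed

end



context cub begin

lemma edge_at: assumes "e \<in> E" "x \<in> e" shows "\<exists>u. e = {x,u} \<and> u \<in> N x"
proof -
  obtain p q where pq: "e = {p,q}" "p \<noteq> q" using edge_form assms(1) by blast
  show ?thesis
  proof (cases "x = p")
    case True then show ?thesis using pq assms by (auto simp: N_def)
  next
    case False then have "x = q" using pq assms(2) by auto
    then show ?thesis using pq assms(1) by (intro exI[of _ p]) (auto simp: N_def insert_commute)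
  qed
qed

lemma extof: "u \<in> N v \<Longrightarrow> {(a,b). {a,b} = {v,u} \<and> a \<noteq> b} = ext v u"
  using nbr(1)[of u v] by (auto simp: ext_def doubleton_eq_iff)

lemma colorable_of: assumes "max_matching H F" "nu (H - F) = card E" shows "three_edge_colorable E"
proof -
  have fin: "finite (H - F)" using finH by simp
  obtain M where M: "matching (H - F) M" "card M = card E" using nu_attained[OF fin] assms(2) by metis
  have A: "matching H F" "card F = card E" using assms(1) nu_H by (auto simp: max_matching_def)
  have B: "matching H M" "card M = card E" using M matching_Diff by auto
  have AB: "F \<inter> M = {}" using M(1) by (auto simp: matching_def)
  have BA: "M \<inter> F = {}" using AB by blast
  define col where "col e = (if {(a,b). {a,b} = e \<and> a \<noteq> b} \<in> F then 0
       else if {(a,b). {a,b} = e \<and> a \<noteq> b} \<in> M then 1 else (2::nat))" for e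
  show ?thesis unfolding three_edge_colorable_def
  proof (intro exI[of _ col] conjI ballI impI)
    fix e assume "e \<in> E" show "col e < 3" by (simp add: col_def)
  next
    fix e1 e2 assume e: "e1 \<in> E" "e2 \<in> E" "e1 \<noteq> e2 \<and> e1 \<inter> e2 \<noteq> {}"
    then obtain x where x: "x \<in> e1" "x \<in> e2" by blast
    obtain u where u: "e1 = {x,u}" "u \<in> N x" using edge_at e(1) x(1) by blast
    obtain w where w: "e2 = {x,w}" "w \<in> N x" using edge_at e(2) x(2) by blast
    have uw: "u \<noteq> w" using u w e(3) by blast
    have c1: "col e1 = (if ext x u \<in> F then 0 else if ext x u \<in> M then 1 else 2)"
      unfolding col_def u(1) extof[OF u(2)] ..
    have c2: "col e2 = (if ext x w \<in> F then 0 else if ext x w \<in> M then 1 else 2)"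
      unfolding col_def w(1) extof[OF w(2)] ..
    have n1: "\<not> (ext x u \<in> F \<and> ext x w \<in> F)" using two_same[OF A B AB u(2) w(2) uw] by blast
    have n2: "\<not> (ext x u \<in> M \<and> ext x w \<in> M)" using two_same[OF B A BA u(2) w(2) uw] by blast
    have n3: "\<not> (ext x u \<notin> F \<union> M \<and> ext x w \<notin> F \<union> M)" using two_none[OF A B AB u(2) w(2) uw] by blast
    show "col e1 \<noteq> col e2" unfolding c1 c2 using n1 n2 n3 by auto
  qed
qed

end

locale cub_col = cub +
  fixes c :: "'a set \<Rightarrow> nat"
  assumes clt: "\<And>e. e \<in> E \<Longrightarrow> c e < 3"
    and cpr: "\<And>e1 e2. e1 \<in> E \<Longrightarrow> e2 \<in> E \<Longrightarrow> e1 \<noteq> e2 \<Longrightarrow> e1 \<inter> e2 \<noteq> {} \<Longrightarrow> c e1 \<noteq> c e2"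
begin

lemma cprop: assumes "u \<in> N v" "w \<in> N v" "u \<noteq> w" shows "c {v,u} \<noteq> c {v,w}"
proof (rule cpr)
  show "{v,u} \<in> E" "{v,w} \<in> E" using assms by (auto simp: N_def)
  show "{v,u} \<noteq> {v,w}" using assms nbr(1)[OF assms(1)] by (auto simp: doubleton_eq_iff)
  show "{v,u} \<inter> {v,w} \<noteq> {}" by simp
qed

lemma clt': "u \<in> N v \<Longrightarrow> c {v,u} < 3" using clt by (auto simp: N_def)

lemma cex: assumes "v \<in> V" "k < 3" shows "\<exists>y\<in>N v. c {v,y} = k"
proof -
  obtain a b d where abd: "N v = {a,b,d}" "a \<noteq> b" "b \<noteq> d" "a \<noteq> d" using three[OF assms(1)] by blast
  have m: "a \<in> N v" "b \<in> N v" "d \<in> N v" using abd by auto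
  have "c {v,a} \<noteq> c {v,b}" "c {v,b} \<noteq> c {v,d}" "c {v,a} \<noteq> c {v,d}" using cprop m abd by auto
  moreover have "c {v,a} < 3" "c {v,b} < 3" "c {v,d} < 3" using clt' m by auto
  ultimately have "k = c {v,a} \<or> k = c {v,b} \<or> k = c {v,d}" using assms(2) by arith
  then show ?thesis using m by metis
qed

definition P where "P k = {ext v u | v u. u \<in> N v \<and> c {v,u} = k} \<union>
  {{(v,u),(v,w)} | v u w. u \<in> N v \<and> w \<in> N v \<and> u \<noteq> w \<and> c {v,u} \<noteq> k \<and> c {v,w} \<noteq> k}"

lemma P_sub: "P k \<subseteq> H" unfolding P_def using ext_in_H tri_in_H by blast

lemma P_at: assumes "e \<in> P k" "(v,u) \<in> e"
  shows "(e = ext v u \<and> c {v,u} = k) \<or> (\<exists>w\<in>N v. w \<noteq> u \<and> e = {(v,u),(v,w)} \<and> c {v,u} \<noteq> k \<and> c {v,w} \<noteq> k)"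
  using assms(1) unfolding P_def Un_iff
proof
  assume "e \<in> {ext v u | v u. u \<in> N v \<and> c {v,u} = k}"
  then obtain a b where h: "e = ext a b" "b \<in> N a" "c {a,b} = k" by blast
  show ?thesis
  proof (cases "(v,u) = (a,b)")
    case True then show ?thesis using h by simp
  next
    case False then have "(v,u) = (b,a)" using h(1) assms(2) by (auto simp: ext_def)
    then show ?thesis using h by (auto simp: ext_def insert_commute)
  qed
next
  assume "e \<in> {{(v,u),(v,w)} | v u w. u \<in> N v \<and> w \<in> N v \<and> u \<noteq> w \<and> c {v,u} \<noteq> k \<and> c {v,w} \<noteq> k}"
  then obtain a b d where h: "e = {(a,b),(a,d)}" "b \<in> N a" "d \<in> N a" "b \<noteq> d" "c {a,b} \<noteq> k" "c {a,d} \<noteq> k" by blast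
  show ?thesis
  proof (cases "(v,u) = (a,b)")
    case True then show ?thesis using h by auto
  next
    case False then have "(v,u) = (a,d)" using h(1) assms(2) by auto
    then show ?thesis using h by (intro disjI2 bexI[of _ b]) (auto simp: insert_commute)
  qed
qed

lemma P_match: assumes "k < 3" shows "matching H (P k)"
  unfolding matching_def
proof (intro conjI ballI impI)
  show "P k \<subseteq> H" by (rule P_sub)
  fix e1 e2 assume e: "e1 \<in> P k" "e2 \<in> P k" "e1 \<noteq> e2"
  show "e1 \<inter> e2 = {}"
  proof (rule ccontr)
    assume "e1 \<inter> e2 \<noteq> {}"
    then obtain v u where x: "(v,u) \<in> e1" "(v,u) \<in> e2" by auto
    note p1 = P_at[OF e(1) x(1)] and p2 = P_at[OF e(2) x(2)]
    show False
    proof (cases "e1 = ext v u \<and> c {v,u} = k")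
      case True
      then show False using p2 e(3) by blast
    next
      case False
      then obtain w1 where w1: "w1 \<in> N v" "w1 \<noteq> u" "e1 = {(v,u),(v,w1)}" "c {v,u} \<noteq> k" "c {v,w1} \<noteq> k"
        using p1 by blast
      then obtain w2 where w2: "w2 \<in> N v" "w2 \<noteq> u" "e2 = {(v,u),(v,w2)}" "c {v,w2} \<noteq> k"
        using p2 by blast
      have "w1 \<noteq> w2" using w1 w2 e(3) by blast
      have u: "u \<in> N v" using W_iff H_sub P_sub e(1) x(1) by fastforce
      have N3: "N v = {u,w1,w2}" using N_eq3[OF u w1(1) w2(1)] w1 w2 \<open>w1 \<noteq> w2\<close> by auto
      obtain y where "y \<in> N v" "c {v,y} = k" using cex[OF nbr(2)[OF u] assms] by blast
      then show False using N3 w1 w2 by auto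
    qed
  qed
qed

lemma P_cover: assumes "k < 3" "x \<in> W" shows "\<exists>e\<in>P k. x \<in> e"
proof -
  obtain v u where x: "x = (v,u)" "u \<in> N v" using assms(2) W_iff by (cases x) auto
  show ?thesis
  proof (cases "c {v,u} = k")
    case True
    then have "ext v u \<in> P k" using x unfolding P_def by blast
    then show ?thesis using x by (auto simp: ext_def)
  next
    case False
    obtain y where y: "y \<in> N v" "c {v,y} = k" using cex[OF nbr(2)[OF x(2)] assms(1)] by blast
    obtain w where w: "w \<in> N v" "w \<noteq> u" "w \<noteq> y" using third[OF x(2) y(1)] by blast
    have "c {v,w} \<noteq> k" using cprop[OF w(1) y(1) w(3)] y(2) by simp
    then have "{(v,u),(v,w)} \<in> P k" using x w False unfolding P_def by blast
    then show ?thesis using x by auto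
  qed
qed

lemma P_disj: "P 0 \<inter> P 1 = {}"
proof (rule ccontr)
  assume "P 0 \<inter> P 1 \<noteq> {}"
  then obtain e where e: "e \<in> P 0" "e \<in> P 1" by blast
  have "card e = 2" using e P_sub H_sub by blast
  then obtain v u where x: "(v,u) \<in> e" by (metis card.empty ex_in_conv zero_neq_numeral surj_pair)
  note p0 = P_at[OF e(1) x] and p1 = P_at[OF e(2) x]
  have u: "u \<in> N v" using W_iff H_sub P_sub e(1) x by fastforce
  show False
  proof (cases "e = ext v u")
    case True
    then have "c {v,u} = 0" using p0 ext_ne_tri[OF u] by metis
    moreover have "c {v,u} = 1" using True p1 ext_ne_tri[OF u] by metis
    ultimately show False by simp
  next
    case False
    then obtain w where w: "w \<in> N v" "w \<noteq> u" "e = {(v,u),(v,w)}" "c {v,u} \<noteq> 0" "c {v,w} \<noteq> 0" using p0 by blast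
    obtain w' where w': "w' \<in> N v" "w' \<noteq> u" "e = {(v,u),(v,w')}" "c {v,u} \<noteq> 1" "c {v,w'} \<noteq> 1" using p1 False by blast
    have "(v,w) \<in> {(v,u),(v,w')}" using w(3) w'(3) by (metis insertCI)
    then have "w = w'" using w(2) by simp
    then have "c {v,u} = 2" "c {v,w} = 2" using w w' clt'[OF u] clt'[OF w(1)] by auto
    then show False using cprop[OF u w(1)] w(2) by simp
  qed
qed

lemma L_ge: "card E \<le> L_inv H"
proof -
  have m0: "matching H (P 0)" "matching H (P 1)" using P_match by auto
  have c0: "card (P 0) = card E" "card (P 1) = card E" using cover_perfect m0 P_cover by auto
  have mm: "max_matching H (P 0)" using m0 c0 nu_H by (simp add: max_matching_def)
  have "matching (H - P 0) (P 1)" using m0(2) P_disj unfolding matching_def by blast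
  then have "card (P 1) \<le> nu (H - P 0)" using nu_ge finH by blast
  then show ?thesis using L_l_facts(1)[OF finH mm] c0 by simp
qed

end




context cub begin

lemma main_cub: "three_edge_colorable E \<longleftrightarrow> real (L_inv H) = 3 / 2 * real (l_inv H)"
proof -
  have hs: "2 * card E = 3 * card V" by (rule handshake)
  have eq: "real (L_inv H) = 3 / 2 * real (l_inv H) \<longleftrightarrow> L_inv H = card E"
  proof -
    have "real (L_inv H) = 3 / 2 * real (l_inv H) \<longleftrightarrow> 2 * real (L_inv H) = 3 * real (card V)"
      using l_val by auto
    also have "\<dots> \<longleftrightarrow> 2 * L_inv H = 3 * card V" by linarith
    also have "\<dots> \<longleftrightarrow> L_inv H = card E" using hs by linarith
    finally show ?thesis .
  qed
  show ?thesis unfolding eq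
  proof
    assume "three_edge_colorable E"
    then obtain c :: "'a set \<Rightarrow> nat" where c: "\<forall>e\<in>E. c e < 3"
      "\<forall>e1\<in>E. \<forall>e2\<in>E. e1 \<noteq> e2 \<and> e1 \<inter> e2 \<noteq> {} \<longrightarrow> c e1 \<noteq> c e2"
      unfolding three_edge_colorable_def by blast
    interpret cc: cub_col V E c using c by unfold_locales auto
    show "L_inv H = card E" using cc.L_ge L_le by simp
  next
    assume "L_inv H = card E"
    obtain F where "max_matching H F" "L_inv H = nu (H - F)" using L_l_facts(3)[OF finH] by blast
    then show "three_edge_colorable E" using colorable_of \<open>L_inv H = card E\<close> by simp
  qed
qed

end

theorem mainTheorem8:
  fixes V :: "'a set" and E :: "'a set set"
  assumes "cubic V E" and "bridgeless V E"
  shows "three_edge_colorable E \<longleftrightarrow>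
         real (L_inv (tri_E E)) = 3 / 2 * real (l_inv (tri_E E))"
proof -
  interpret cub V E using assms(1) by unfold_locales
  show ?thesis by (rule main_cub)
qed


end
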